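(* For all $1\leq n<\omega$, $\Theta_n\geq\aleph_n$.
   Context: For $1\leq n<\omega$, $\Theta_n$ is the least cardinal $\theta$ such that for every function $f:\theta^n\to\omega$ there is a sequence $\langle A_i\mid i<n\rangle$ of infinite subsets of $\theta$ such that $f\restriction\prod_{i<n}A_i$ is constant. *)

theory Defs
  imports Main "HOL-Library.FuncSet" "HOL-Library.Countable_Set"
begin

text \<open>card_le_aleph k X  means  |X| \<le> aleph_k.
  aleph_0-bounded = countable; |X| \<le> aleph_(k+1) iff X carries a well-order
  all of whose proper initial segments have size \<le> aleph_k.\<close>
fun card_le_aleph :: "nat \<Rightarrow> 'a set \<Rightarrow> bool" where
  "card_le_aleph 0 X = countable X"
| "card_le_aleph (Suc k) X =
     (\<exists>R. Well_order R \<and> Field R = X \<and> (\<forall>x\<in>X. card_le_aleph k (underS R x)))"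

fun card_lt_aleph :: "nat \<Rightarrow> 'a set \<Rightarrow> bool" where
  "card_lt_aleph 0 X = finite X"
| "card_lt_aleph (Suc k) X = card_le_aleph k X"

text \<open>Theta_prop n X: for every f : X^n \<rightarrow> omega there are infinite A_0..A_(n-1) \<subseteq> X
  with f constant on their product (tuples are functions on {..<n}).\<close>
definition Theta_prop :: "nat \<Rightarrow> 'a set \<Rightarrow> bool" where
  "Theta_prop n X \<longleftrightarrow>
     (\<forall>f :: (nat \<Rightarrow> 'a) \<Rightarrow> nat. \<exists>A :: nat \<Rightarrow> 'a set.
        (\<forall>i<n. A i \<subseteq> X \<and> infinite (A i)) \<and>
        (\<exists>c. \<forall>x\<in>Pi\<^sub>E {..<n} A. f x = c))"

end

theory Submission
  imports Defs
begin

lemma max_exists: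
  fixes k :: nat and x :: "nat \<Rightarrow> 'a"
  assumes wo: "Well_order R"
  shows "(\<forall>j\<le>k. x j \<in> Field R) \<Longrightarrow> \<exists>i\<le>k. \<forall>j\<le>k. (x j, x i) \<in> R"
proof (induction k)
  case 0
  have "refl_on (Field R) R" using wo
    by (simp add: well_order_on_def linear_order_on_def partial_order_on_def preorder_on_def)
  then show ?case using 0 by (auto simp: refl_on_def)
next
  case (Suc k)
  then obtain i where i: "i \<le> k" "\<forall>j\<le>k. (x j, x i) \<in> R" by auto
  have tot: "total_on (Field R) R" and rf: "refl_on (Field R) R" and tr: "trans R" using wo
    by (auto simp add: well_order_on_def linear_order_on_def partial_order_on_def preorder_on_def)
  have xi: "x i \<in> Field R" "x (Suc k) \<in> Field R" using Suc.prems i by auto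
  show ?case
  proof (cases "(x (Suc k), x i) \<in> R")
    case True
    then show ?thesis using i by (intro exI[of _ i]) (auto simp: le_Suc_eq)
  next
    case False
    then have "x (Suc k) \<noteq> x i" using rf xi by (auto simp: refl_on_def)
    then have c: "(x i, x (Suc k)) \<in> R" using tot xi False by (auto simp: total_on_def)
    have "\<forall>j\<le>Suc k. (x j, x (Suc k)) \<in> R"
    proof (intro allI impI)
      fix j assume "j \<le> Suc k"
      then consider "j \<le> k" | "j = Suc k" by linarith
      then show "(x j, x (Suc k)) \<in> R"
      proof cases
        case 1 then show ?thesis using i c tr by (meson transD)
      next
        case 2 then show ?thesis using rf xi by (auto simp: refl_on_def)
      qed
    qed
    then show ?thesis by auto
  qed
qed

definition rmv :: "nat \<Rightarrow> (nat \<Rightarrow> 'a) \<Rightarrow> nat \<Rightarrow> 'a" where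
  "rmv m x = (\<lambda>j. if j < m then x j else x (Suc j))"

definition ins :: "nat \<Rightarrow> 'a \<Rightarrow> (nat \<Rightarrow> 'a) \<Rightarrow> nat \<Rightarrow> 'a" where
  "ins m a y = (\<lambda>j. if j < m then y j else if j = m then a else y (j - 1))"

lemma rmv_ins: "rmv m (ins m a y) = y"
  by (rule ext) (auto simp: rmv_def ins_def)

lemma main:
  "card_le_aleph k (X :: 'a set) \<Longrightarrow> \<exists>f::(nat\<Rightarrow>'a)\<Rightarrow>nat. \<forall>A. (\<forall>i<Suc k. A i \<subseteq> X \<and> infinite (A i))
     \<longrightarrow> \<not>(\<exists>c. \<forall>x\<in>Pi\<^sub>E {..<Suc k} A. f x = c)"
proof (induction k arbitrary: X)
  case 0
  then have cX: "countable X" by simp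
  show ?case
  proof (intro exI[of _ "\<lambda>x. to_nat_on X (x 0)"] allI impI notI)
    fix A :: "nat \<Rightarrow> 'a set"
    assume A: "\<forall>i<Suc 0. A i \<subseteq> X \<and> infinite (A i)"
      and c: "\<exists>c. \<forall>x\<in>Pi\<^sub>E {..<Suc 0} A. to_nat_on X (x 0) = c"
    then obtain c where c: "\<forall>x\<in>Pi\<^sub>E {..<Suc 0} A. to_nat_on X (x 0) = c" by blast
    have inf: "infinite (A 0)" and sub: "A 0 \<subseteq> X" using A by auto
    obtain a where a: "a \<in> A 0" using inf by (metis finite.emptyI ex_in_conv)
    have "infinite (A 0 - {a})" using inf by simp
    then have "A 0 - {a} \<noteq> {}" by (metis finite.emptyI)
    then obtain b where b: "b \<in> A 0" "b \<noteq> a" by blast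
    have ea: "(\<lambda>i. if i < 1 then a else undefined) \<in> Pi\<^sub>E {..<Suc 0} A" using a by (auto simp: PiE_def extensional_def)
    have eb: "(\<lambda>i. if i < 1 then b else undefined) \<in> Pi\<^sub>E {..<Suc 0} A" using b by (auto simp: PiE_def extensional_def)
    have "to_nat_on X a = c" using c[rule_format, OF ea] by simp
    moreover have "to_nat_on X b = c" using c[rule_format, OF eb] by simp
    ultimately have "to_nat_on X a = to_nat_on X b" by simp
    moreover have "a \<in> X" "b \<in> X" using a b sub by auto
    ultimately have "a = b" using inj_onD[OF inj_on_to_nat_on[OF cX]] by blast
    then show False using b by simp
  qed
next
  case (Suc k)
  from Suc.prems obtain R where R: "Well_order R" "Field R = X"
    "\<forall>x\<in>X. card_le_aleph k (underS R x)" by auto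
  have "\<forall>a. \<exists>h::(nat\<Rightarrow>'a)\<Rightarrow>nat. a \<in> X \<longrightarrow> (\<forall>A. (\<forall>i<Suc k. A i \<subseteq> underS R a \<and> infinite (A i))
     \<longrightarrow> \<not>(\<exists>c. \<forall>x\<in>Pi\<^sub>E {..<Suc k} A. h x = c))"
  proof
    fix a
    show "\<exists>h::(nat\<Rightarrow>'a)\<Rightarrow>nat. a \<in> X \<longrightarrow> (\<forall>A. (\<forall>i<Suc k. A i \<subseteq> underS R a \<and> infinite (A i))
     \<longrightarrow> \<not>(\<exists>c. \<forall>x\<in>Pi\<^sub>E {..<Suc k} A. h x = c))"
    proof (cases "a \<in> X")
      case True
      then have "card_le_aleph k (underS R a)" using R(3) by simp
      from Suc.IH[OF this] obtain h :: "(nat\<Rightarrow>'a)\<Rightarrow>nat" where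
        "\<forall>A. (\<forall>i<Suc k. A i \<subseteq> underS R a \<and> infinite (A i))
     \<longrightarrow> \<not>(\<exists>c. \<forall>x\<in>Pi\<^sub>E {..<Suc k} A. h x = c)" by (erule exE)
      then show ?thesis by (intro exI[of _ h]) simp
    qed simp
  qed
  from choice[OF this] obtain g :: "'a \<Rightarrow> (nat\<Rightarrow>'a)\<Rightarrow>nat" where g0: "\<forall>a. a \<in> X \<longrightarrow> (\<forall>A. (\<forall>i<Suc k. A i \<subseteq> underS R a \<and> infinite (A i))
     \<longrightarrow> \<not>(\<exists>c. \<forall>x\<in>Pi\<^sub>E {..<Suc k} A. g a x = c))"
    by (erule exE)
  have g: "\<And>a A. a \<in> X \<Longrightarrow> (\<forall>i<Suc k. A i \<subseteq> underS R a \<and> infinite (A i))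
     \<Longrightarrow> \<not>(\<exists>c. \<forall>x\<in>Pi\<^sub>E {..<Suc k} A. g a x = c)"
    using g0 by blast
  define m where "m x = (LEAST i. i \<le> Suc k \<and> (\<forall>j\<le>Suc k. (x j, x i) \<in> R))" for x :: "nat \<Rightarrow> 'a"
  define f where "f x = prod_encode (m x, g (x (m x)) (rmv (m x) x))" for x
  show ?case
  proof (intro exI[of _ f] allI impI notI)
    fix A :: "nat \<Rightarrow> 'a set"
    assume A: "\<forall>i<Suc (Suc k). A i \<subseteq> X \<and> infinite (A i)"
      and "\<exists>c. \<forall>x\<in>Pi\<^sub>E {..<Suc (Suc k)} A. f x = c"
    then obtain c where c: "\<And>x. x\<in>Pi\<^sub>E {..<Suc (Suc k)} A \<Longrightarrow> f x = c" by blast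
    have mprop: "m x \<le> Suc k \<and> (\<forall>j\<le>Suc k. (x j, x (m x)) \<in> R)" if "x \<in> Pi\<^sub>E {..<Suc (Suc k)} A" for x
    proof -
      have "\<forall>j\<le>Suc k. x j \<in> Field R"
      proof (intro allI impI)
        fix j assume "j \<le> Suc k"
        then have j: "j < Suc (Suc k)" by simp
        then have "x j \<in> A j" using that by (auto simp: PiE_def)
        moreover have "A j \<subseteq> X" using A j by blast
        ultimately show "x j \<in> Field R" using R(2) by blast
      qed
      then obtain i where "i \<le> Suc k \<and> (\<forall>j\<le>Suc k. (x j, x i) \<in> R)"
        using max_exists[OF R(1)] by blast
      then show ?thesis unfolding m_def by (rule LeastI)
    qed
    have ne: "A i \<noteq> {}" if "i < Suc (Suc k)" for i
      using A that by (metis finite.emptyI)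
    then have "Pi\<^sub>E {..<Suc (Suc k)} A \<noteq> {}" by (simp add: PiE_eq_empty_iff)
    then obtain x0 where x0: "x0 \<in> Pi\<^sub>E {..<Suc (Suc k)} A" by blast
    define m0 where "m0 = m x0"
    have m0: "m0 \<le> Suc k" using mprop[OF x0] m0_def by simp
    have mc: "m x = m0" if "x \<in> Pi\<^sub>E {..<Suc (Suc k)} A" for x
    proof -
      have "fst (prod_decode (f x)) = fst (prod_decode (f x0))" using c that x0 by simp
      then show ?thesis by (simp add: f_def m0_def)
    qed
    obtain a where a: "a \<in> A m0" using ne m0 by fastforce
    have "m0 < Suc (Suc k)" using m0 by simp
    then have "A m0 \<subseteq> X" using A by blast
    then have aX: "a \<in> X" using a by blast
    have below: "(b, a) \<in> R" if "i \<le> Suc k" "i \<noteq> m0" "b \<in> A i" for i b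
    proof -
      define x where "x = x0(m0 := a, i := b)"
      have xP: "x \<in> Pi\<^sub>E {..<Suc (Suc k)} A"
        using x0 a that m0 by (auto simp: x_def PiE_def Pi_def extensional_def)
      have "(x i, x (m x)) \<in> R" using mprop[OF xP] that by blast
      then show "(b, a) \<in> R" using mc[OF xP] that by (simp add: x_def)
    qed
    define B where "B j = A (if j < m0 then j else Suc j) - {a}" for j
    have Bok: "\<forall>j<Suc k. B j \<subseteq> underS R a \<and> infinite (B j)"
    proof (intro allI impI conjI)
      fix j assume j: "j < Suc k"
      show "B j \<subseteq> underS R a"
        using below[of "if j < m0 then j else Suc j"] j by (auto simp: B_def underS_def)
      show "infinite (B j)" using A j by (simp add: B_def)
    qed
    have "\<forall>y\<in>Pi\<^sub>E {..<Suc k} B. g a y = snd (prod_decode c)"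
    proof
      fix y assume y: "y \<in> Pi\<^sub>E {..<Suc k} B"
      define x where "x = ins m0 a y"
      have xP: "x \<in> Pi\<^sub>E {..<Suc (Suc k)} A"
      proof (rule PiE_I)
        fix j assume j: "j \<in> {..<Suc (Suc k)}"
        consider "j < m0" | "j = m0" | "j > m0" by linarith
        then show "x j \<in> A j"
        proof cases
          case 1
          then have "j < Suc k" using m0 by simp
          then have "y j \<in> B j" using y by (auto simp: PiE_def)
          then show ?thesis using 1 by (simp add: x_def ins_def B_def)
        next
          case 2 then show ?thesis using a by (simp add: x_def ins_def)
        next
          case 3
          then have "y (j - 1) \<in> B (j - 1)" using y j by (auto simp: PiE_def Pi_def)
          moreover have "\<not> (j - 1 < m0)" "Suc (j - 1) = j" using 3 by auto
          ultimately show ?thesis using 3 by (simp add: x_def ins_def B_def)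
        qed
      next
        fix j assume j: "j \<notin> {..<Suc (Suc k)}"
        then have "y (j - 1) = undefined" using y by (auto simp: PiE_def extensional_def)
        then show "x j = undefined" using j m0 by (auto simp: x_def ins_def)
      qed
      have "f x = c" using c[OF xP] .
      moreover have "m x = m0" using mc[OF xP] .
      moreover have "x m0 = a" by (simp add: x_def ins_def)
      moreover have "rmv m0 x = y" by (simp add: x_def rmv_ins)
      ultimately show "g a y = snd (prod_decode c)" by (auto simp: f_def)
    qed
    then show False using g[OF aX Bok] by blast
  qed
qed

theorem corollary5p3:
  fixes n :: nat and X :: "'a set"
  assumes "1 \<le> n" and "Theta_prop n X"
  shows "\<not> card_lt_aleph n X"
proof
  assume h: "card_lt_aleph n X"
  obtain k where k: "n = Suc k" using assms(1) by (cases n) auto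
  then have "card_le_aleph k X" using h by simp
  from main[OF this] obtain f :: "(nat \<Rightarrow> 'a) \<Rightarrow> nat" where f: "\<forall>A. (\<forall>i<Suc k. A i \<subseteq> X \<and> infinite (A i))
     \<longrightarrow> \<not>(\<exists>c. \<forall>x\<in>Pi\<^sub>E {..<Suc k} A. f x = c)" by (erule exE)
  have "\<exists>A :: nat \<Rightarrow> 'a set. (\<forall>i<n. A i \<subseteq> X \<and> infinite (A i)) \<and> (\<exists>c. \<forall>x\<in>Pi\<^sub>E {..<n} A. f x = c)"
    using spec[OF assms(2)[unfolded Theta_prop_def], of f] .
  then obtain A :: "nat \<Rightarrow> 'a set" where A: "(\<forall>i<n. A i \<subseteq> X \<and> infinite (A i)) \<and> (\<exists>c. \<forall>x\<in>Pi\<^sub>E {..<n} A. f x = c)"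
    by (erule exE)
  then show False using f[rule_format, of A] k by simp
qed

end
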